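(* Let $\mathcal{C}$ be a clutter and let $A$ be the $n\times s$ matrix with columns $v_1,\ldots,v_s$. Then $$I(X)=\big(\{t^{a^+}-t^{a^-}: a\in\mathbb{Z}^s,\ Aa^+\equiv Aa^-\ (\mathrm{mod}\ q-1),\ |a^+|=|a^-|\}\big),$$ where $a^+,a^-\in\mathbb{N}^s$ are the positive and negative parts of $a$ ($a=a^+-a^-$, disjoint supports), the congruence is entrywise, and $|b|=b_1+\cdots+b_s$.
   Context: Let $K=\mathbb{F}_q$ be a finite field with $q\neq 2$ elements. A clutter $\mathcal{C}$ with vertex set $\{y_1,\ldots,y_n\}$ is a family of subsets (edges) of this set such that no edge is contained in another; let its edges be $f_1,\ldots,f_s$ ($s\geq 2$) with characteristic vectors $v_i=\sum_{y_j\in f_i}e_j\in\{0,1\}^n$. For $x\in K^n$ write $x^{v_i}=\prod_j x_j^{v_{ij}}$. Let $X=\{[(x^{v_1},\ldots,x^{v_s})]\in\mathbb{P}^{s-1}: x\in (K^* )^n\}$, let $S=K[t_1,\ldots,t_s]$ with the standard grading, and let $I(X)$ be the ideal of $S$ generated by the homogeneous polynomials vanishing on $X$. *)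

theory Defs
  imports Main "HOL-Library.Poly_Mapping" "HOL-Library.Cardinality"
begin

text \<open>Variable t_(i+1) of the paper is variable index i here (0-based).\<close>

type_synonym 'a mpoly = "(nat \<Rightarrow>\<^sub>0 nat) \<Rightarrow>\<^sub>0 'a"

definition polys :: "nat \<Rightarrow> 'a::comm_ring_1 mpoly set" where
  "polys s = {p. \<forall>m \<in> Poly_Mapping.keys p. Poly_Mapping.keys m \<subseteq> {..<s}}"

definition monom :: "(nat \<Rightarrow>\<^sub>0 nat) \<Rightarrow> 'a::comm_ring_1 mpoly" where
  "monom b = Poly_Mapping.single b 1"

definition mdeg :: "(nat \<Rightarrow>\<^sub>0 nat) \<Rightarrow> nat" where
  "mdeg m = (\<Sum>i\<in>Poly_Mapping.keys m. Poly_Mapping.lookup m i)"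

definition homogeneous :: "'a::comm_ring_1 mpoly \<Rightarrow> bool" where
  "homogeneous p \<longleftrightarrow> (\<exists>d. \<forall>m \<in> Poly_Mapping.keys p. mdeg m = d)"

definition eval :: "'a::comm_ring_1 mpoly \<Rightarrow> (nat \<Rightarrow> 'a) \<Rightarrow> 'a" where
  "eval p y = (\<Sum>m\<in>Poly_Mapping.keys p. Poly_Mapping.lookup p m * (\<Prod>i\<in>Poly_Mapping.keys m. y i ^ Poly_Mapping.lookup m i))"

definition ideal_gen :: "nat \<Rightarrow> 'a::comm_ring_1 mpoly set \<Rightarrow> 'a mpoly set" where
  "ideal_gen s G = {p. \<exists>F c. finite F \<and> F \<subseteq> G \<and> (\<forall>g\<in>F. c g \<in> polys s)
                          \<and> p = (\<Sum>g\<in>F. c g * g)}"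

definition clutter :: "nat \<Rightarrow> nat \<Rightarrow> (nat \<Rightarrow> nat set) \<Rightarrow> bool" where
  "clutter n s f \<longleftrightarrow> (\<forall>i<s. f i \<subseteq> {..<n}) \<and>
                     (\<forall>i<s. \<forall>j<s. i \<noteq> j \<longrightarrow> \<not> f i \<subseteq> f j)"

definition edge_mon :: "(nat \<Rightarrow> nat set) \<Rightarrow> (nat \<Rightarrow> 'a::comm_ring_1) \<Rightarrow> nat \<Rightarrow> 'a" where
  "edge_mon f x i = (\<Prod>j\<in>f i. x j)"

text \<open>The point (x^{v_1},...,x^{v_s}) (coordinates beyond s are irrelevant, set to 0).\<close>
definition param_pt :: "nat \<Rightarrow> (nat \<Rightarrow> nat set) \<Rightarrow> (nat \<Rightarrow> 'a::comm_ring_1) \<Rightarrow> nat \<Rightarrow> 'a" where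
  "param_pt s f x = (\<lambda>i. if i < s then edge_mon f x i else 0)"

text \<open>A homogeneous polynomial vanishes on the projective point [P] iff it vanishes
  at (any, equivalently every) representative P. Hence I(X) is the ideal of S generated by
  the homogeneous polynomials of S vanishing at all (x^{v_1},...,x^{v_s}), x \<in> (K^*)^n.\<close>
definition vanishing_ideal :: "nat \<Rightarrow> nat \<Rightarrow> (nat \<Rightarrow> nat set) \<Rightarrow> 'a::field mpoly set" where
  "vanishing_ideal n s f = ideal_gen s
     {g \<in> polys s. homogeneous g \<and>
        (\<forall>x. (\<forall>j<n. x j \<noteq> 0) \<longrightarrow> eval g (param_pt s f x) = 0)}"

definition pos_part :: "(nat \<Rightarrow>\<^sub>0 int) \<Rightarrow> (nat \<Rightarrow>\<^sub>0 nat)" where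
  "pos_part a = Poly_Mapping.map (\<lambda>z. nat z) a"

definition neg_part :: "(nat \<Rightarrow>\<^sub>0 int) \<Rightarrow> (nat \<Rightarrow>\<^sub>0 nat)" where
  "neg_part a = Poly_Mapping.map (\<lambda>z. nat (- z)) a"

text \<open>(A b)_j = sum over i<s of v_{ij} b_i = sum of b_i over edges i containing vertex j.\<close>
definition Amul :: "nat \<Rightarrow> (nat \<Rightarrow> nat set) \<Rightarrow> (nat \<Rightarrow>\<^sub>0 nat) \<Rightarrow> nat \<Rightarrow> int" where
  "Amul s f b j = (\<Sum>i\<in>{i. i < s \<and> j \<in> f i}. int (Poly_Mapping.lookup b i))"

definition binomial_gens :: "nat \<Rightarrow> nat \<Rightarrow> (nat \<Rightarrow> nat set) \<Rightarrow> 'a::{field,finite} mpoly set" where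
  "binomial_gens n s f =
     {monom (pos_part a) - monom (neg_part a) | a.
        Poly_Mapping.keys a \<subseteq> {..<s} \<and>
        (\<forall>j<n. Amul s f (pos_part a) j mod (int (CARD('a)) - 1)
               = Amul s f (neg_part a) j mod (int (CARD('a)) - 1)) \<and>
        mdeg (pos_part a) = mdeg (neg_part a)}"

end

theory Submission
  imports Defs "HOL-Computational_Algebra.Polynomial" "HOL-Library.FuncSet"
begin

lemma ff_card_ge2: "CARD('a::{field,finite}) \<ge> 2"
proof -
  have "{0::'a,1} \<subseteq> UNIV" by simp
  hence "card {0::'a,1} \<le> CARD('a)" by (intro card_mono) auto
  thus ?thesis by simp
qed

lemma ff_pow:
  fixes x :: "'a::{field,finite}" assumes "x \<noteq> 0"
  shows "x ^ (CARD('a) - 1) = 1"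
proof -
  let ?U = "UNIV - {0::'a}"
  have bij: "bij_betw (\<lambda>y. x*y) ?U ?U"
    unfolding bij_betw_def
  proof
    show "inj_on ((*) x) ?U" using assms by (auto simp: inj_on_def)
    show "(*) x ` ?U = ?U"
    proof
      show "(*) x ` ?U \<subseteq> ?U" using assms by auto
      show "?U \<subseteq> (*) x ` ?U"
      proof
        fix y assume "y \<in> ?U"
        hence "y = x * (y / x)" "y / x \<in> ?U" using assms by auto
        thus "y \<in> (*) x ` ?U" by blast
      qed
    qed
  qed
  have "(\<Prod>y\<in>?U. x*y) = (\<Prod>y\<in>?U. y)" using prod.reindex_bij_betw[OF bij, of "\<lambda>y. y"] by simp
  moreover have "(\<Prod>y\<in>?U. x*y) = x ^ card ?U * (\<Prod>y\<in>?U. y)"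
    by (simp add: prod.distrib)
  moreover have "card ?U = CARD('a) - 1" by (simp add: card_Diff_subset)
  moreover have "(\<Prod>y\<in>?U. y) \<noteq> 0" by simp
  ultimately show ?thesis by (metis mult_cancel_right1)
qed

lemma ff_char: "of_nat CARD('a::{field,finite}) = (0::'a)"
proof -
  have bij: "bij_betw (\<lambda>y::'a. y + 1) UNIV UNIV"
    by (rule bij_betwI[where g="\<lambda>y. y - 1"]) auto
  have "(\<Sum>y\<in>UNIV. y + 1) = (\<Sum>y\<in>(UNIV::'a set). y)"
    using sum.reindex_bij_betw[OF bij, of "\<lambda>y. y"] by simp
  thus ?thesis by (simp add: sum.distrib)
qed

lemma ff_qm1: "of_nat (CARD('a::{field,finite}) - 1) = (-1::'a)"
  using ff_char[where 'a='a] ff_card_ge2[where 'a='a] by (simp add: of_nat_diff)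

lemma ff_pow_mod:
  fixes x :: "'a::{field,finite}" assumes "x \<noteq> 0"
  shows "x ^ k = x ^ (k mod (CARD('a) - 1))"
proof -
  have "x ^ k = x ^ ((CARD('a) - 1) * (k div (CARD('a) - 1)) + k mod (CARD('a) - 1))" by simp
  also have "\<dots> = x ^ (k mod (CARD('a) - 1))"
    by (simp only: power_add power_mult ff_pow[OF assms]) simp
  finally show ?thesis .
qed

lemma ff_exists_nonroot:
  assumes "\<not> (CARD('a::{field,finite}) - 1) dvd k"
  shows "\<exists>y::'a. y \<noteq> 0 \<and> y ^ k \<noteq> 1"
proof (rule ccontr)
  assume H: "\<not> ?thesis"
  define r where "r = k mod (CARD('a) - 1)"
  have r0: "r > 0" using assms by (simp add: r_def mod_eq_0_iff_dvd[symmetric])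
  have rlt: "r < CARD('a) - 1" using ff_card_ge2[where 'a='a] by (simp add: r_def)
  define p :: "'a poly" where "p = Polynomial.monom 1 r - 1"
  have degp: "degree p = r" unfolding p_def using r0
    using degree_add_eq_left[of "-1" "Polynomial.monom (1::'a) r"]
    by (simp add: degree_monom_eq)
  hence "p \<noteq> 0" using r0 by auto
  have "UNIV - {0::'a} \<subseteq> {x. poly p x = 0}"
  proof
    fix y :: 'a assume "y \<in> UNIV - {0}"
    hence "y ^ k = 1" using H by auto
    hence "y ^ r = 1" using ff_pow_mod[of y k] \<open>y \<in> _\<close> by (simp add: r_def)
    thus "y \<in> {x. poly p x = 0}" by (simp add: p_def poly_monom)
  qed
  hence "card (UNIV - {0::'a}) \<le> card {x. poly p x = 0}" by (intro card_mono) auto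
  also have "\<dots> \<le> r" using card_poly_roots_bound[OF \<open>p \<noteq> 0\<close>] degp by simp
  finally show False using rlt by (simp add: card_Diff_subset)
qed

lemma ff_sum_pow:
  "(\<Sum>x\<in>UNIV-{0::'a::{field,finite}}. x^k) = (if (CARD('a) - 1) dvd k then -1 else 0)"
proof (cases "(CARD('a) - 1) dvd k")
  case True
  have "(\<Sum>x\<in>UNIV-{0::'a}. x^k) = (\<Sum>x\<in>UNIV-{0::'a}. 1)"
  proof (rule sum.cong)
    fix x :: 'a assume "x \<in> UNIV - {0}"
    thus "x ^ k = 1" using ff_pow_mod[of x k] True by auto
  qed simp
  also have "\<dots> = of_nat (CARD('a) - 1)" by (simp add: card_Diff_subset)
  finally show ?thesis using True ff_qm1[where 'a='a] by simp
next
  case False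
  then obtain y :: 'a where y: "y \<noteq> 0" "y ^ k \<noteq> 1" using ff_exists_nonroot by blast
  let ?U = "UNIV - {0::'a}"
  have bij: "bij_betw (\<lambda>z. y*z) ?U ?U"
    unfolding bij_betw_def
  proof
    show "inj_on ((*) y) ?U" using y by (auto simp: inj_on_def)
    show "(*) y ` ?U = ?U"
    proof
      show "(*) y ` ?U \<subseteq> ?U" using y by auto
      show "?U \<subseteq> (*) y ` ?U"
      proof
        fix z assume "z \<in> ?U"
        hence "z = y * (z / y)" "z / y \<in> ?U" using y by auto
        thus "z \<in> (*) y ` ?U" by blast
      qed
    qed
  qed
  have "(\<Sum>z\<in>?U. (y*z)^k) = (\<Sum>z\<in>?U. z^k)" using sum.reindex_bij_betw[OF bij, of "\<lambda>z. z^k"] by simp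
  hence "y^k * (\<Sum>z\<in>?U. z^k) = 1 * (\<Sum>z\<in>?U. z^k)" by (simp add: power_mult_distrib sum_distrib_left)
  hence "(\<Sum>z\<in>?U. z^k) = 0" using y(2) by (metis mult_cancel_right)
  thus ?thesis using False by simp
qed


lemma polys_add: "p \<in> polys s \<Longrightarrow> q \<in> polys s \<Longrightarrow> p + q \<in> polys s"
  unfolding polys_def mem_Collect_eq using keys_add[of p q] by (meson Un_iff subsetD)

lemma polys_zero: "0 \<in> polys s" unfolding polys_def by simp

lemma polys_one: "1 \<in> polys s" unfolding polys_def mem_Collect_eq keys_one by simp

lemma polys_single: "Poly_Mapping.keys m \<subseteq> {..<s} \<Longrightarrow> Poly_Mapping.single m c \<in> polys s"
  unfolding polys_def by simp

lemma polys_mult: "p \<in> polys s \<Longrightarrow> q \<in> polys s \<Longrightarrow> p * q \<in> polys s"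
proof -
  assume p: "p \<in> polys s" and q: "q \<in> polys s"
  show ?thesis unfolding polys_def mem_Collect_eq
  proof (intro ballI)
    fix m assume "m \<in> Poly_Mapping.keys (p * q)"
    then obtain a b where "m = a + b" "a \<in> Poly_Mapping.keys p" "b \<in> Poly_Mapping.keys q"
      using keys_mult by blast
    moreover have "Poly_Mapping.keys a \<subseteq> {..<s}" "Poly_Mapping.keys b \<subseteq> {..<s}"
      using p q \<open>a \<in> _\<close> \<open>b \<in> _\<close> unfolding polys_def by auto
    ultimately show "Poly_Mapping.keys m \<subseteq> {..<s}" using keys_add[of a b] by blast
  qed
qed

lemma ideal_gen_base: "g \<in> G \<Longrightarrow> g \<in> ideal_gen s G"
  unfolding ideal_gen_def
  by (rule CollectI, rule exI[of _ "{g}"], rule exI[of _ "\<lambda>_. 1"]) (simp add: polys_one)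

lemma ideal_gen_zero: "0 \<in> ideal_gen s G"
  unfolding ideal_gen_def by (rule CollectI, rule exI[of _ "{}"]) simp

lemma ideal_gen_add:
  assumes "p \<in> ideal_gen s G" "q \<in> ideal_gen s G"
  shows "p + q \<in> ideal_gen s G"
proof -
  obtain F1 c1 where 1: "finite F1" "F1 \<subseteq> G" "\<forall>g\<in>F1. c1 g \<in> polys s" "p = (\<Sum>g\<in>F1. c1 g * g)"
    using assms(1) unfolding ideal_gen_def by blast
  obtain F2 c2 where 2: "finite F2" "F2 \<subseteq> G" "\<forall>g\<in>F2. c2 g \<in> polys s" "q = (\<Sum>g\<in>F2. c2 g * g)"
    using assms(2) unfolding ideal_gen_def by blast
  define c where "c g = (if g \<in> F1 then c1 g else 0) + (if g \<in> F2 then c2 g else 0)" for g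
  have fin: "finite (F1 \<union> F2)" using 1 2 by simp
  have "(\<Sum>g\<in>F1 \<union> F2. c g * g) = (\<Sum>g\<in>F1 \<union> F2. (if g \<in> F1 then c1 g * g else 0))
        + (\<Sum>g\<in>F1 \<union> F2. (if g \<in> F2 then c2 g * g else 0))"
    unfolding c_def sum.distrib[symmetric] by (rule sum.cong) (auto simp: distrib_right)
  also have "\<dots> = p + q"
  proof -
    have e1: "(F1 \<union> F2) \<inter> F1 = F1" "(F1 \<union> F2) \<inter> F2 = F2" by blast+
    have "(\<Sum>g\<in>F1 \<union> F2. (if g \<in> F1 then c1 g * g else 0)) = p"
      using sum.inter_restrict[OF fin, of "\<lambda>g. c1 g * g" F1, symmetric] unfolding e1 1(4) .
    moreover have "(\<Sum>g\<in>F1 \<union> F2. (if g \<in> F2 then c2 g * g else 0)) = q"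
      using sum.inter_restrict[OF fin, of "\<lambda>g. c2 g * g" F2, symmetric] unfolding e1 2(4) .
    ultimately show ?thesis by simp
  qed
  finally have "p + q = (\<Sum>g\<in>F1 \<union> F2. c g * g)" by simp
  moreover have "\<forall>g\<in>F1 \<union> F2. c g \<in> polys s"
    using 1(3) 2(3) by (auto simp: c_def intro!: polys_add polys_zero)
  ultimately show ?thesis unfolding ideal_gen_def using 1 2 fin
    by (intro CollectI exI[of _ "F1 \<union> F2"] exI[of _ c]) auto
qed

lemma ideal_gen_mult:
  assumes "a \<in> polys s" "p \<in> ideal_gen s G"
  shows "a * p \<in> ideal_gen s G"
proof -
  obtain F c where 1: "finite F" "F \<subseteq> G" "\<forall>g\<in>F. c g \<in> polys s" "p = (\<Sum>g\<in>F. c g * g)"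
    using assms(2) unfolding ideal_gen_def by blast
  have "a * p = (\<Sum>g\<in>F. (a * c g) * g)" using 1(4) by (simp add: sum_distrib_left mult.assoc)
  moreover have "\<forall>g\<in>F. a * c g \<in> polys s" using 1(3) assms(1) polys_mult by blast
  ultimately show ?thesis unfolding ideal_gen_def using 1
    by (intro CollectI exI[of _ F] exI[of _ "\<lambda>g. a * c g"]) auto
qed

lemma ideal_gen_sum:
  assumes "finite I" "\<And>i. i \<in> I \<Longrightarrow> p i \<in> ideal_gen s G"
  shows "(\<Sum>i\<in>I. p i) \<in> ideal_gen s G"
  using assms by (induction I rule: finite_induct) (auto intro: ideal_gen_zero ideal_gen_add)

lemma ideal_gen_mono:
  assumes "G \<subseteq> ideal_gen s H"
  shows "ideal_gen s G \<subseteq> ideal_gen s H"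
proof
  fix p assume "p \<in> ideal_gen s G"
  then obtain F c where 1: "finite F" "F \<subseteq> G" "\<forall>g\<in>F. c g \<in> polys s" "p = (\<Sum>g\<in>F. c g * g)"
    unfolding ideal_gen_def by blast
  show "p \<in> ideal_gen s H" unfolding 1(4)
    by (rule ideal_gen_sum[OF 1(1)]) (use 1 assms in \<open>auto intro: ideal_gen_mult\<close>)
qed

definition mev :: "(nat \<Rightarrow>\<^sub>0 nat) \<Rightarrow> (nat \<Rightarrow> 'a::comm_ring_1) \<Rightarrow> 'a" where
  "mev m y = (\<Prod>i\<in>Poly_Mapping.keys m. y i ^ Poly_Mapping.lookup m i)"

lemma eval_sup:
  assumes "finite A" "Poly_Mapping.keys p \<subseteq> A"
  shows "eval p y = (\<Sum>m\<in>A. Poly_Mapping.lookup p m * mev m y)"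
  unfolding eval_def mev_def
  by (rule sum.mono_neutral_left[OF assms]) (auto simp: in_keys_iff)

lemma eval_add: "eval (p + q) y = eval p y + eval q y"
proof -
  let ?A = "Poly_Mapping.keys p \<union> Poly_Mapping.keys q"
  have "eval (p + q) y = (\<Sum>m\<in>?A. Poly_Mapping.lookup (p + q) m * mev m y)"
    by (rule eval_sup) (auto simp: keys_add)
  also have "\<dots> = (\<Sum>m\<in>?A. Poly_Mapping.lookup p m * mev m y) + (\<Sum>m\<in>?A. Poly_Mapping.lookup q m * mev m y)"
    by (simp add: lookup_add distrib_right sum.distrib)
  also have "\<dots> = eval p y + eval q y"
  proof -
    have "eval p y = (\<Sum>m\<in>?A. Poly_Mapping.lookup p m * mev m y)" by (rule eval_sup) auto
    moreover have "eval q y = (\<Sum>m\<in>?A. Poly_Mapping.lookup q m * mev m y)" by (rule eval_sup) auto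
    ultimately show ?thesis by simp
  qed
  finally show ?thesis .
qed

lemma eval_diff: "eval (p - q) y = eval p y - eval q y"
proof -
  let ?A = "Poly_Mapping.keys p \<union> Poly_Mapping.keys q"
  have "eval (p - q) y = (\<Sum>m\<in>?A. Poly_Mapping.lookup (p - q) m * mev m y)"
    by (rule eval_sup) (auto simp: keys_diff)
  also have "\<dots> = (\<Sum>m\<in>?A. Poly_Mapping.lookup p m * mev m y) - (\<Sum>m\<in>?A. Poly_Mapping.lookup q m * mev m y)"
    by (simp add: lookup_minus left_diff_distrib sum_subtractf)
  also have "\<dots> = eval p y - eval q y"
  proof -
    have "eval p y = (\<Sum>m\<in>?A. Poly_Mapping.lookup p m * mev m y)" by (rule eval_sup) auto
    moreover have "eval q y = (\<Sum>m\<in>?A. Poly_Mapping.lookup q m * mev m y)" by (rule eval_sup) auto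
    ultimately show ?thesis by simp
  qed
  finally show ?thesis .
qed

lemma eval_single: "eval (Poly_Mapping.single m c) y = c * mev m y"
  by (simp add: eval_def mev_def)

lemma mev_sup:
  assumes "finite B" "Poly_Mapping.keys m \<subseteq> B"
  shows "mev m y = (\<Prod>i\<in>B. y i ^ Poly_Mapping.lookup m i)"
  unfolding mev_def
  by (rule prod.mono_neutral_left[OF assms]) (auto simp: in_keys_iff)

definition AN :: "nat \<Rightarrow> (nat \<Rightarrow> nat set) \<Rightarrow> (nat \<Rightarrow>\<^sub>0 nat) \<Rightarrow> nat \<Rightarrow> nat" where
  "AN s f b j = (\<Sum>i\<in>{i. i < s \<and> j \<in> f i}. Poly_Mapping.lookup b i)"

lemma Amul_AN: "Amul s f b j = int (AN s f b j)"
  by (simp add: Amul_def AN_def)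

lemma AN_add: "AN s f (a + b) j = AN s f a j + AN s f b j"
  by (simp add: AN_def lookup_add sum.distrib)

lemma mev_param:
  assumes "\<forall>i<s. f i \<subseteq> {..<n}" "Poly_Mapping.keys m \<subseteq> {..<s}"
  shows "mev m (param_pt s f x) = (\<Prod>j<n. x j ^ AN s f m j)"
proof -
  have "mev m (param_pt s f x) = (\<Prod>i<s. param_pt s f x i ^ Poly_Mapping.lookup m i)"
    by (rule mev_sup) (use assms in auto)
  also have "\<dots> = (\<Prod>i<s. \<Prod>j\<in>f i. x j ^ Poly_Mapping.lookup m i)"
    by (simp add: param_pt_def edge_mon_def prod_power_distrib)
  also have "\<dots> = (\<Prod>i<s. \<Prod>j<n. if j \<in> f i then x j ^ Poly_Mapping.lookup m i else 1)"
  proof (rule prod.cong[OF refl])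
    fix i assume "i \<in> {..<s}"
    hence e: "{j \<in> {..<n}. j \<in> f i} = f i" using assms(1) by auto
    show "(\<Prod>j\<in>f i. x j ^ Poly_Mapping.lookup m i) = (\<Prod>j<n. if j \<in> f i then x j ^ Poly_Mapping.lookup m i else 1)"
      using prod.inter_filter[of "{..<n}" "\<lambda>j. x j ^ Poly_Mapping.lookup m i" "\<lambda>j. j \<in> f i"] e by simp
  qed
  also have "\<dots> = (\<Prod>j<n. \<Prod>i<s. if j \<in> f i then x j ^ Poly_Mapping.lookup m i else 1)"
    by (rule prod.swap)
  also have "\<dots> = (\<Prod>j<n. \<Prod>i\<in>{i. i < s \<and> j \<in> f i}. x j ^ Poly_Mapping.lookup m i)"
  proof (rule prod.cong[OF refl])
    fix j
    have e: "{i \<in> {..<s}. j \<in> f i} = {i. i < s \<and> j \<in> f i}" by auto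
    show "(\<Prod>i<s. if j \<in> f i then x j ^ Poly_Mapping.lookup m i else 1) = (\<Prod>i\<in>{i. i < s \<and> j \<in> f i}. x j ^ Poly_Mapping.lookup m i)"
      using prod.inter_filter[of "{..<s}" "\<lambda>i. x j ^ Poly_Mapping.lookup m i" "\<lambda>i. j \<in> f i"] unfolding e by simp
  qed
  also have "\<dots> = (\<Prod>j<n. x j ^ AN s f m j)" by (simp add: AN_def power_sum)
  finally show ?thesis .
qed


lemma lookup_map0: "g 0 = 0 \<Longrightarrow> Poly_Mapping.lookup (Poly_Mapping.map g p) k = g (Poly_Mapping.lookup p k)"
  by (simp add: Poly_Mapping.map.rep_eq when_def)

lemma lookup_pos: "Poly_Mapping.lookup (pos_part a) i = nat (Poly_Mapping.lookup a i)"
  unfolding pos_part_def by (rule lookup_map0) simp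

lemma lookup_neg: "Poly_Mapping.lookup (neg_part a) i = nat (- Poly_Mapping.lookup a i)"
  unfolding neg_part_def by (rule lookup_map0) simp

lemma keys_pos: "Poly_Mapping.keys (pos_part a) \<subseteq> Poly_Mapping.keys a"
  by (auto simp: in_keys_iff lookup_pos)

lemma keys_neg: "Poly_Mapping.keys (neg_part a) \<subseteq> Poly_Mapping.keys a"
  by (auto simp: in_keys_iff lookup_neg)

lemma mdeg_sup:
  assumes "finite A" "Poly_Mapping.keys m \<subseteq> A"
  shows "mdeg m = (\<Sum>i\<in>A. Poly_Mapping.lookup m i)"
  unfolding mdeg_def by (rule sum.mono_neutral_left[OF assms]) (auto simp: in_keys_iff)

lemma nat_dvd_iff_mod:
  fixes a b Q :: nat assumes "Q \<ge> 1"
  shows "Q dvd (a + (Q - 1) * b) \<longleftrightarrow> a mod Q = b mod Q"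
proof -
  have e: "a + (Q - 1) * b + b = a + Q * b" using assms
    by (metis add.assoc add.commute mult_eq_if not_one_le_zero)
  have "Q dvd (a + (Q - 1) * b) \<longleftrightarrow> (a + (Q - 1) * b + b) mod Q = b mod Q"
    using mod_eq_dvd_iff_nat[of b "a + (Q - 1) * b + b" Q] by simp
  also have "\<dots> \<longleftrightarrow> a mod Q = b mod Q" unfolding e by simp
  finally show ?thesis .
qed

lemma nat_mod_cancel:
  fixes a b g Q :: nat
  assumes "(g + a) mod Q = (g + b) mod Q"
  shows "a mod Q = b mod Q"
proof -
  have "int (g + a) mod int Q = int (g + b) mod int Q" using assms by (metis zmod_int)
  hence "int Q dvd int (g + a) - int (g + b)" by (simp add: mod_eq_dvd_iff)
  hence "int Q dvd int a - int b" by simp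
  hence "int a mod int Q = int b mod int Q" by (simp add: mod_eq_dvd_iff)
  thus ?thesis by (metis zmod_int of_nat_eq_iff)
qed

lemma AN_mod_from_Amul:
  assumes "Amul s f b j mod (int (CARD('a::{field,finite})) - 1) = Amul s f b' j mod (int (CARD('a)) - 1)"
  shows "AN s f b j mod (CARD('a) - 1) = AN s f b' j mod (CARD('a) - 1)"
proof -
  have q: "int (CARD('a)) - 1 = int (CARD('a) - 1)" using ff_card_ge2[where 'a='a] by simp
  show ?thesis using assms unfolding q Amul_AN by (metis zmod_int of_nat_eq_iff)
qed

lemma Amul_from_AN_mod:
  assumes "AN s f b j mod (CARD('a::{field,finite}) - 1) = AN s f b' j mod (CARD('a) - 1)"
  shows "Amul s f b j mod (int (CARD('a)) - 1) = Amul s f b' j mod (int (CARD('a)) - 1)"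
proof -
  have q: "int (CARD('a)) - 1 = int (CARD('a) - 1)" using ff_card_ge2[where 'a='a] by simp
  show ?thesis using assms unfolding q Amul_AN by (metis zmod_int)
qed

lemma keys_binom: "Poly_Mapping.keys (Defs.monom P - Defs.monom N :: 'a::comm_ring_1 mpoly) \<subseteq> {P, N}"
  using keys_diff[of "Defs.monom P :: 'a mpoly" "Defs.monom N"] by (auto simp: Defs.monom_def split: if_splits)

lemma bin_in_VG:
  assumes cl: "clutter n s f" and b: "b \<in> (binomial_gens n s f :: 'a::{field,finite} mpoly set)"
  shows "b \<in> polys s \<and> homogeneous b \<and> (\<forall>x. (\<forall>j<n. x j \<noteq> 0) \<longrightarrow> eval b (param_pt s f x) = 0)"
proof -
  obtain a where a: "b = Defs.monom (pos_part a) - Defs.monom (neg_part a)" "Poly_Mapping.keys a \<subseteq> {..<s}"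
    "\<forall>j<n. Amul s f (pos_part a) j mod (int (CARD('a)) - 1) = Amul s f (neg_part a) j mod (int (CARD('a)) - 1)"
    "mdeg (pos_part a) = mdeg (neg_part a)"
    using b unfolding binomial_gens_def by blast
  define P where "P = pos_part a"
  define N where "N = neg_part a"
  have kP: "Poly_Mapping.keys P \<subseteq> {..<s}" using keys_pos a(2) P_def by blast
  have kN: "Poly_Mapping.keys N \<subseteq> {..<s}" using keys_neg a(2) N_def by blast
  have kb: "Poly_Mapping.keys b \<subseteq> {P, N}" unfolding a(1) P_def[symmetric] N_def[symmetric] by (rule keys_binom)
  have 1: "b \<in> polys s" unfolding polys_def mem_Collect_eq
  proof
    fix m assume "m \<in> Poly_Mapping.keys b"
    hence "m = P \<or> m = N" using kb by blast
    thus "Poly_Mapping.keys m \<subseteq> {..<s}" using kP kN by blast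
  qed
  have 2: "homogeneous b" unfolding homogeneous_def
  proof (rule exI[of _ "mdeg P"], rule ballI)
    fix m assume "m \<in> Poly_Mapping.keys b"
    hence "m = P \<or> m = N" using kb by blast
    thus "mdeg m = mdeg P" using a(4) P_def N_def by auto
  qed
  have 3: "eval b (param_pt s f x) = 0" if x: "\<forall>j<n. x j \<noteq> 0" for x
  proof -
    have fi: "\<forall>i<s. f i \<subseteq> {..<n}" using cl unfolding clutter_def by blast
    have "eval b (param_pt s f x) = (\<Prod>j<n. x j ^ AN s f P j) - (\<Prod>j<n. x j ^ AN s f N j)"
      unfolding a(1) P_def[symmetric] N_def[symmetric] eval_diff Defs.monom_def eval_single
      using mev_param[OF fi kP, where x=x] mev_param[OF fi kN, where x=x] by simp
    also have "(\<Prod>j<n. x j ^ AN s f P j) = (\<Prod>j<n. x j ^ AN s f N j)"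
    proof (rule prod.cong[OF refl])
      fix j assume "j \<in> {..<n}"
      hence j: "j < n" by simp
      have "AN s f P j mod (CARD('a) - 1) = AN s f N j mod (CARD('a) - 1)"
        using AN_mod_from_Amul a(3) j P_def N_def by blast
      thus "x j ^ AN s f P j = x j ^ AN s f N j"
        using ff_pow_mod[of "x j" "AN s f P j"] ff_pow_mod[of "x j" "AN s f N j"] x j by simp
    qed
    finally show ?thesis by simp
  qed
  show ?thesis using 1 2 3 by blast
qed


lemma prod_if_all:
  "(\<Prod>j<n. if P j then (c::'a::field) else 0) = (if (\<forall>j<n. P j) then c ^ n else 0)"
proof (cases "\<forall>j<n. P j")
  case True thus ?thesis by simp
next
  case False
  then obtain j where "j < n" "\<not> P j" by blast
  hence "(\<Prod>j<n. if P j then c else 0) = 0" by (intro prod_zero) auto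
  thus ?thesis using False by simp
qed

lemma orth:
  fixes g :: "'a::{field,finite} mpoly"
  assumes fi: "\<forall>i<s. f i \<subseteq> {..<n}" and gp: "g \<in> polys s"
    and van: "\<forall>x. (\<forall>j<n. x j \<noteq> 0) \<longrightarrow> eval g (param_pt s f x) = 0"
  shows "(\<Sum>m\<in>{m \<in> Poly_Mapping.keys g. \<forall>j<n. AN s f m j mod (CARD('a) - 1) = AN s f m1 j mod (CARD('a) - 1)}.
           Poly_Mapping.lookup g m) = 0"
proof -
  define Q where "Q = CARD('a) - 1"
  have Q1: "Q \<ge> 1" using ff_card_ge2[where 'a='a] by (simp add: Q_def)
  define U where "U = UNIV - {0::'a}"
  define P where "P = PiE {..<n} (\<lambda>_. U)"
  define K where "K = Poly_Mapping.keys g"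
  define c where "c = Poly_Mapping.lookup g"
  define w where "w j = (Q - 1) * AN s f m1 j" for j
  define same where "same m = (\<forall>j<n. AN s f m j mod Q = AN s f m1 j mod Q)" for m
  have finK: "finite K" by (simp add: K_def)
  have finP: "finite P" unfolding P_def by (intro finite_PiE) auto
  have kK: "Poly_Mapping.keys m \<subseteq> {..<s}" if "m \<in> K" for m
    using gp that unfolding polys_def K_def by blast
  have ev: "eval g (param_pt s f x) = (\<Sum>m\<in>K. c m * (\<Prod>j<n. x j ^ AN s f m j))" for x :: "nat \<Rightarrow> 'a"
  proof -
    have "eval g (param_pt s f x) = (\<Sum>m\<in>K. c m * mev m (param_pt s f x))"
      by (simp add: eval_def mev_def K_def c_def)
    also have "\<dots> = (\<Sum>m\<in>K. c m * (\<Prod>j<n. x j ^ AN s f m j))"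
      by (rule sum.cong[OF refl]) (simp add: mev_param[OF fi kK])
    finally show ?thesis .
  qed
  have z: "eval g (param_pt s f x) = 0" if "x \<in> P" for x
  proof -
    have "\<forall>j<n. x j \<noteq> 0" using that unfolding P_def U_def by (auto simp: PiE_iff)
    thus ?thesis using van by blast
  qed
  have "0 = (\<Sum>x\<in>P. eval g (param_pt s f x) * (\<Prod>j<n. x j ^ w j))"
    using z by simp
  also have "\<dots> = (\<Sum>x\<in>P. \<Sum>m\<in>K. c m * (\<Prod>j<n. x j ^ (AN s f m j + w j)))"
    unfolding ev by (simp add: sum_distrib_right mult.assoc prod.distrib[symmetric] power_add)
  also have "\<dots> = (\<Sum>m\<in>K. c m * (\<Sum>x\<in>P. \<Prod>j<n. x j ^ (AN s f m j + w j)))"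
    by (subst sum.swap) (simp add: sum_distrib_left)
  also have "\<dots> = (\<Sum>m\<in>K. c m * (\<Prod>j<n. \<Sum>y\<in>U. y ^ (AN s f m j + w j)))"
    unfolding P_def by (subst prod_sum_PiE) (auto simp: U_def)
  also have "\<dots> = (\<Sum>m\<in>K. c m * (if same m then (-1) ^ n else 0))"
  proof (rule sum.cong[OF refl])
    fix m
    have "(\<Prod>j<n. \<Sum>y\<in>U. y ^ (AN s f m j + w j)) = (\<Prod>j<n. if AN s f m j mod Q = AN s f m1 j mod Q then (-1::'a) else 0)"
    proof (rule prod.cong[OF refl])
      fix j
      show "(\<Sum>y\<in>U. y ^ (AN s f m j + w j)) = (if AN s f m j mod Q = AN s f m1 j mod Q then (-1::'a) else 0)"
        unfolding U_def ff_sum_pow Q_def[symmetric] w_def nat_dvd_iff_mod[OF Q1] ..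
    qed
    also have "\<dots> = (if same m then (-1) ^ n else 0)"
      unfolding prod_if_all same_def ..
    finally show "c m * (\<Prod>j<n. \<Sum>y\<in>U. y ^ (AN s f m j + w j)) = c m * (if same m then (-1) ^ n else 0)"
      by simp
  qed
  also have "\<dots> = (-1) ^ n * (\<Sum>m\<in>K. if same m then c m else 0)"
    by (simp add: sum_distrib_left if_distrib mult.commute cong: if_cong)
  also have "\<dots> = (-1) ^ n * (\<Sum>m\<in>{m \<in> K. same m}. c m)"
    using sum.inter_filter[OF finK, of c same] by simp
  finally have "(\<Sum>m\<in>{m \<in> K. same m}. c m) = 0" by simp
  thus ?thesis unfolding K_def c_def same_def Q_def .
qed


lemma lookup_single_if: "Poly_Mapping.lookup (Poly_Mapping.single m v) k = (if m = k then v else 0)"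
  by (simp add: lookup_single when_def)

lemma pm_sum_singles: "p = (\<Sum>m\<in>Poly_Mapping.keys p. Poly_Mapping.single m (Poly_Mapping.lookup p m))"
proof (rule poly_mapping_eqI)
  fix k
  show "Poly_Mapping.lookup p k = Poly_Mapping.lookup (\<Sum>m\<in>Poly_Mapping.keys p. Poly_Mapping.single m (Poly_Mapping.lookup p m)) k"
    unfolding lookup_sum lookup_single_if by (simp add: sum.delta in_keys_iff)
qed

lemma bin_ideal:
  assumes km: "Poly_Mapping.keys m \<subseteq> {..<s}" and km': "Poly_Mapping.keys m' \<subseteq> {..<s}"
    and deg: "mdeg m = mdeg m'"
    and same: "\<forall>j<n. AN s f m j mod (CARD('a) - 1) = AN s f m' j mod (CARD('a) - 1)"
  shows "(Defs.monom m - Defs.monom m' :: 'a::{field,finite} mpoly) \<in> ideal_gen s (binomial_gens n s f)"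
proof -
  define a :: "nat \<Rightarrow>\<^sub>0 int" where "a = Poly_Mapping.map int m - Poly_Mapping.map int m'"
  have la: "Poly_Mapping.lookup a i = int (Poly_Mapping.lookup m i) - int (Poly_Mapping.lookup m' i)" for i
    unfolding a_def lookup_minus by (simp add: lookup_map0)
  define P where "P = pos_part a"
  define N where "N = neg_part a"
  have lP: "Poly_Mapping.lookup P i = Poly_Mapping.lookup m i - Poly_Mapping.lookup m' i" for i
    unfolding P_def lookup_pos la by simp
  have lN: "Poly_Mapping.lookup N i = Poly_Mapping.lookup m' i - Poly_Mapping.lookup m i" for i
    unfolding N_def lookup_neg la by simp
  define g0 where "g0 = m - P"
  have lg: "Poly_Mapping.lookup g0 i = Poly_Mapping.lookup m i - (Poly_Mapping.lookup m i - Poly_Mapping.lookup m' i)" for i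
    unfolding g0_def lookup_minus lP ..
  have em: "m = g0 + P" by (rule poly_mapping_eqI) (simp add: lookup_add lg lP)
  have em': "m' = g0 + N" by (rule poly_mapping_eqI) (simp add: lookup_add lg lN)
  have kg0: "Poly_Mapping.keys g0 \<subseteq> {..<s}"
  proof
    fix i assume "i \<in> Poly_Mapping.keys g0"
    hence "Poly_Mapping.lookup m i \<noteq> 0" by (auto simp: in_keys_iff lg)
    hence "i \<in> Poly_Mapping.keys m" by (simp add: in_keys_iff)
    thus "i \<in> {..<s}" using km by blast
  qed
  have ka: "Poly_Mapping.keys a \<subseteq> {..<s}"
  proof
    fix i assume "i \<in> Poly_Mapping.keys a"
    hence "Poly_Mapping.lookup m i \<noteq> 0 \<or> Poly_Mapping.lookup m' i \<noteq> 0" by (auto simp: in_keys_iff la)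
    hence "i \<in> Poly_Mapping.keys m \<or> i \<in> Poly_Mapping.keys m'" by (simp add: in_keys_iff)
    thus "i \<in> {..<s}" using km km' by blast
  qed
  have kP: "Poly_Mapping.keys P \<subseteq> {..<s}" using keys_pos ka P_def by blast
  have kN: "Poly_Mapping.keys N \<subseteq> {..<s}" using keys_neg ka N_def by blast
  have cong: "\<forall>j<n. Amul s f P j mod (int (CARD('a)) - 1) = Amul s f N j mod (int (CARD('a)) - 1)"
  proof (intro allI impI)
    fix j assume j: "j < n"
    have "(AN s f g0 j + AN s f P j) mod (CARD('a) - 1) = (AN s f g0 j + AN s f N j) mod (CARD('a) - 1)"
      using same j unfolding em em' AN_add by blast
    hence "AN s f P j mod (CARD('a) - 1) = AN s f N j mod (CARD('a) - 1)" by (rule nat_mod_cancel)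
    thus "Amul s f P j mod (int (CARD('a)) - 1) = Amul s f N j mod (int (CARD('a)) - 1)"
      by (rule Amul_from_AN_mod)
  qed
  have dg: "mdeg P = mdeg N"
  proof -
    have "mdeg m = mdeg g0 + mdeg P"
      using mdeg_sup[OF _ km] mdeg_sup[OF _ kg0] mdeg_sup[OF _ kP] unfolding em[symmetric]
      by (simp add: em lookup_add sum.distrib)
    moreover have "mdeg m' = mdeg g0 + mdeg N"
      using mdeg_sup[OF _ km'] mdeg_sup[OF _ kg0] mdeg_sup[OF _ kN] unfolding em'[symmetric]
      by (simp add: em' lookup_add sum.distrib)
    ultimately show ?thesis using deg by simp
  qed
  have B: "(Defs.monom P - Defs.monom N :: 'a mpoly) \<in> binomial_gens n s f"
    unfolding binomial_gens_def using ka cong dg unfolding P_def N_def by blast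
  have "(Defs.monom m - Defs.monom m' :: 'a mpoly) = Defs.monom g0 * (Defs.monom P - Defs.monom N)"
    unfolding em em' Defs.monom_def by (simp add: right_diff_distrib mult_single)
  moreover have "(Defs.monom g0 :: 'a mpoly) \<in> polys s" unfolding Defs.monom_def by (rule polys_single[OF kg0])
  ultimately show ?thesis using ideal_gen_mult ideal_gen_base[OF B] by metis
qed


lemma VG_in:
  fixes g :: "'a::{field,finite} mpoly"
  assumes cl: "clutter n s f" and gp: "g \<in> polys s" and hom: "homogeneous g"
    and van: "\<forall>x. (\<forall>j<n. x j \<noteq> 0) \<longrightarrow> eval g (param_pt s f x) = 0"
  shows "g \<in> ideal_gen s (binomial_gens n s f)"
proof -
  have fi: "\<forall>i<s. f i \<subseteq> {..<n}" using cl unfolding clutter_def by blast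
  define K where "K = Poly_Mapping.keys g"
  define c where "c = Poly_Mapping.lookup g"
  define same where "same m m' = (\<forall>j<n. AN s f m j mod (CARD('a) - 1) = AN s f m' j mod (CARD('a) - 1))" for m m'
  define rep where "rep m = (SOME m'. m' \<in> K \<and> same m' m)" for m
  have finK: "finite K" by (simp add: K_def)
  have rep: "rep m \<in> K \<and> same (rep m) m" if "m \<in> K" for m
    unfolding rep_def by (rule someI[of _ m]) (use that in \<open>simp add: same_def\<close>)
  have kK: "Poly_Mapping.keys m \<subseteq> {..<s}" if "m \<in> K" for m
    using gp that unfolding polys_def K_def by blast
  obtain d where d: "\<forall>m\<in>K. mdeg m = d" using hom unfolding homogeneous_def K_def by blast
  have gs: "g = (\<Sum>m\<in>K. Poly_Mapping.single m (c m))" unfolding K_def c_def by (rule pm_sum_singles)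
  have split: "g = (\<Sum>m\<in>K. Poly_Mapping.single m (c m) - Poly_Mapping.single (rep m) (c m))
                 + (\<Sum>m\<in>K. Poly_Mapping.single (rep m) (c m))"
    unfolding sum_subtractf using gs by simp
  have zero: "(\<Sum>m\<in>K. Poly_Mapping.single (rep m) (c m)) = 0"
  proof (rule poly_mapping_eqI)
    fix k
    have "Poly_Mapping.lookup (\<Sum>m\<in>K. Poly_Mapping.single (rep m) (c m)) k = (\<Sum>m\<in>K. if rep m = k then c m else 0)"
      unfolding lookup_sum lookup_single_if ..
    also have "\<dots> = (\<Sum>m\<in>{m \<in> K. rep m = k}. c m)"
      using sum.inter_filter[OF finK, of c "\<lambda>m. rep m = k"] by simp
    also have "\<dots> = 0"
    proof (cases "{m \<in> K. rep m = k} = {}")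
      case True show ?thesis unfolding True by simp
    next
      case False
      then obtain m1 where m1: "m1 \<in> K" "rep m1 = k" by blast
      have "{m \<in> K. rep m = k} = {m \<in> K. same m m1}"
      proof (intro set_eqI iffI)
        fix m assume "m \<in> {m \<in> K. rep m = k}"
        hence m: "m \<in> K" "rep m = rep m1" using m1 by auto
        have "same (rep m) m" "same (rep m1) m1" using rep[OF m(1)] rep[OF m1(1)] by auto
        hence "same m m1" using m(2) unfolding same_def by simp
        thus "m \<in> {m \<in> K. same m m1}" using m by simp
      next
        fix m assume "m \<in> {m \<in> K. same m m1}"
        hence m: "m \<in> K" "same m m1" by auto
        have "(\<lambda>m'. m' \<in> K \<and> same m' m) = (\<lambda>m'. m' \<in> K \<and> same m' m1)"
          using m(2) unfolding same_def by auto
        hence "rep m = rep m1" unfolding rep_def by simp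
        thus "m \<in> {m \<in> K. rep m = k}" using m m1 by simp
      qed
      moreover have "(\<Sum>m\<in>{m \<in> K. same m m1}. c m) = 0"
        using orth[OF fi gp van, of m1] unfolding K_def c_def same_def .
      ultimately show ?thesis by simp
    qed
    finally show "Poly_Mapping.lookup (\<Sum>m\<in>K. Poly_Mapping.single (rep m) (c m)) k = Poly_Mapping.lookup 0 k"
      by simp
  qed
  have "(\<Sum>m\<in>K. Poly_Mapping.single m (c m) - Poly_Mapping.single (rep m) (c m)) \<in> ideal_gen s (binomial_gens n s f)"
  proof (rule ideal_gen_sum[OF finK])
    fix m assume m: "m \<in> K"
    have r: "rep m \<in> K" "same (rep m) m" using rep[OF m] by auto
    have B: "Defs.monom m - Defs.monom (rep m) \<in> (ideal_gen s (binomial_gens n s f) :: 'a mpoly set)"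
      by (rule bin_ideal[OF kK[OF m] kK[OF r(1)]]) (use d m r in \<open>auto simp: same_def\<close>)
    have C: "(Poly_Mapping.single 0 (c m) :: 'a mpoly) \<in> polys s" by (rule polys_single) simp
    have "Poly_Mapping.single 0 (c m) * (Defs.monom m - Defs.monom (rep m)) \<in> ideal_gen s (binomial_gens n s f)"
      by (rule ideal_gen_mult[OF C B])
    moreover have "Poly_Mapping.single 0 (c m) * (Defs.monom m - Defs.monom (rep m)) = Poly_Mapping.single m (c m) - Poly_Mapping.single (rep m) (c m)"
      unfolding Defs.monom_def by (simp add: right_diff_distrib mult_single)
    ultimately show "Poly_Mapping.single m (c m) - Poly_Mapping.single (rep m) (c m) \<in> ideal_gen s (binomial_gens n s f)"
      by simp
  qed
  thus ?thesis using split zero by simp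
qed

theorem proposition4p3:
  fixes n s :: nat and f :: "nat \<Rightarrow> nat set"
  assumes "CARD('a::{field,finite}) \<noteq> 2"
    and "clutter n s f"
    and "s \<ge> 2"
  shows "(vanishing_ideal n s f :: 'a mpoly set) = ideal_gen s (binomial_gens n s f)"
proof -
  define VG where "VG = {g \<in> polys s. homogeneous g \<and>
        (\<forall>x. (\<forall>j<n. x j \<noteq> 0) \<longrightarrow> eval g (param_pt s f x) = (0::'a))}"
  have v: "vanishing_ideal n s f = ideal_gen s VG" unfolding vanishing_ideal_def VG_def ..
  have 1: "VG \<subseteq> ideal_gen s (binomial_gens n s f)"
    unfolding VG_def using VG_in[OF assms(2)] by blast
  have 2: "binomial_gens n s f \<subseteq> ideal_gen s VG"
  proof
    fix b assume "b \<in> (binomial_gens n s f :: 'a mpoly set)"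
    hence "b \<in> VG" unfolding VG_def using bin_in_VG[OF assms(2)] by blast
    thus "b \<in> ideal_gen s VG" by (rule ideal_gen_base)
  qed
  show ?thesis unfolding v using ideal_gen_mono[OF 1] ideal_gen_mono[OF 2] by blast
qed

end
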